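(* Let $G$ be a $(P_5,\text{chair})$-free graph and let $C=v_1v_2v_3v_4v_5v_1$ be an induced $C_5$ in $G$. Let $1\le i\le 5$, let $u,v\in S_4(i)$ with $uv\notin E(G)$, and let $s\in R_i=S^1_3(i+1)\cup S^1_3(i-1)\cup S^2_3(i)\cup S_4(i+1)\cup S_4(i-1)\cup S_5$. Then $s$ is adjacent to at least one of $u,v$.
   Context: All graphs are finite and simple; $P_5$ is the path on 5 vertices; the chair is a $P_4$ plus a vertex adjacent to exactly one of the two middle vertices of the $P_4$; "$H$-free" means no induced subgraph isomorphic to $H$. Indices modulo 5; for $v\notin V(C)$ let $N_C(v)=N(v)\cap V(C)$. $S^1_3(j)=\{v\notin V(C): N_C(v)=\{v_{j-1},v_j,v_{j+1}\}\}$, $S^2_3(j)=\{v\notin V(C): N_C(v)=\{v_{j-2},v_j,v_{j+2}\}\}$, $S_4(j)=\{v\notin V(C): N_C(v)=\{v_{j-2},v_{j-1},v_{j+1},v_{j+2}\}\}$, $S_5=\{v\notin V(C): N_C(v)=V(C)\}$. *)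

theory Defs
  imports Main
begin

definition simple_graph :: "'a set \<Rightarrow> ('a \<Rightarrow> 'a \<Rightarrow> bool) \<Rightarrow> bool" where
  "simple_graph V E \<longleftrightarrow> finite V \<and> (\<forall>x y. E x y \<longrightarrow> x \<in> V \<and> y \<in> V)
     \<and> (\<forall>x y. E x y \<longrightarrow> E y x) \<and> (\<forall>x. \<not> E x x)"

definition has_induced :: "'a set \<Rightarrow> ('a \<Rightarrow> 'a \<Rightarrow> bool) \<Rightarrow> nat \<Rightarrow> (nat \<Rightarrow> nat \<Rightarrow> bool) \<Rightarrow> bool" where
  "has_induced V E n H \<longleftrightarrow> (\<exists>f. inj_on f {0..<n} \<and> f ` {0..<n} \<subseteq> V \<and>
     (\<forall>i<n. \<forall>j<n. i \<noteq> j \<longrightarrow> (E (f i) (f j) \<longleftrightarrow> H i j)))"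

definition P5_edge :: "nat \<Rightarrow> nat \<Rightarrow> bool" where
  "P5_edge i j \<longleftrightarrow> i = j + 1 \<or> j = i + 1"

definition chair_edge :: "nat \<Rightarrow> nat \<Rightarrow> bool" where
  "chair_edge i j \<longleftrightarrow> {i, j} \<in> {{0,1},{1,2},{2,3},{1,4}}"

definition P5_chair_free :: "'a set \<Rightarrow> ('a \<Rightarrow> 'a \<Rightarrow> bool) \<Rightarrow> bool" where
  "P5_chair_free V E \<longleftrightarrow> \<not> has_induced V E 5 P5_edge \<and> \<not> has_induced V E 5 chair_edge"

text \<open>Cycle vertices v_j = C (j mod 5), with integer indices.\<close>
definition cv :: "(nat \<Rightarrow> 'a) \<Rightarrow> int \<Rightarrow> 'a" where
  "cv C j = C (nat (j mod 5))"

definition induced_C5 :: "'a set \<Rightarrow> ('a \<Rightarrow> 'a \<Rightarrow> bool) \<Rightarrow> (nat \<Rightarrow> 'a) \<Rightarrow> bool" where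
  "induced_C5 V E C \<longleftrightarrow> inj_on C {0..<5} \<and> C ` {0..<5} \<subseteq> V \<and>
     (\<forall>a<5. \<forall>b<5. E (C a) (C b) \<longleftrightarrow> (int b - int a) mod 5 \<in> {1, 4})"

definition NC :: "('a \<Rightarrow> 'a \<Rightarrow> bool) \<Rightarrow> (nat \<Rightarrow> 'a) \<Rightarrow> 'a \<Rightarrow> 'a set" where
  "NC E C x = {y \<in> C ` {0..<5}. E x y}"

definition outside :: "'a set \<Rightarrow> (nat \<Rightarrow> 'a) \<Rightarrow> 'a set" where
  "outside V C = V - C ` {0..<5}"

definition S13 :: "'a set \<Rightarrow> ('a \<Rightarrow> 'a \<Rightarrow> bool) \<Rightarrow> (nat \<Rightarrow> 'a) \<Rightarrow> int \<Rightarrow> 'a set" where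
  "S13 V E C j = {x \<in> outside V C. NC E C x = {cv C (j-1), cv C j, cv C (j+1)}}"

definition S23 :: "'a set \<Rightarrow> ('a \<Rightarrow> 'a \<Rightarrow> bool) \<Rightarrow> (nat \<Rightarrow> 'a) \<Rightarrow> int \<Rightarrow> 'a set" where
  "S23 V E C j = {x \<in> outside V C. NC E C x = {cv C (j-2), cv C j, cv C (j+2)}}"

definition S4 :: "'a set \<Rightarrow> ('a \<Rightarrow> 'a \<Rightarrow> bool) \<Rightarrow> (nat \<Rightarrow> 'a) \<Rightarrow> int \<Rightarrow> 'a set" where
  "S4 V E C j = {x \<in> outside V C. NC E C x = {cv C (j-2), cv C (j-1), cv C (j+1), cv C (j+2)}}"

definition S5 :: "'a set \<Rightarrow> ('a \<Rightarrow> 'a \<Rightarrow> bool) \<Rightarrow> (nat \<Rightarrow> 'a) \<Rightarrow> 'a set" where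
  "S5 V E C = {x \<in> outside V C. NC E C x = C ` {0..<5}}"

definition R :: "'a set \<Rightarrow> ('a \<Rightarrow> 'a \<Rightarrow> bool) \<Rightarrow> (nat \<Rightarrow> 'a) \<Rightarrow> int \<Rightarrow> 'a set" where
  "R V E C i = S13 V E C (i+1) \<union> S13 V E C (i-1) \<union> S23 V E C i \<union>
      S4 V E C (i+1) \<union> S4 V E C (i-1) \<union> S5 V E C"

end

theory Submission
  imports Defs
begin

lemma all5: "(\<forall>i<(5::nat). P i) = (P 0 \<and> P 1 \<and> P 2 \<and> P 3 \<and> P 4)"
  by (auto simp: less_Suc_eq eval_nat_numeral)

lemma chair_found:
  assumes sg: "simple_graph V E" and inV: "u \<in> V" "v \<in> V" "s \<in> V" "a \<in> V" "b \<in> V"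
    and uv: "u \<noteq> v"
    and e: "E u b" "E v b" "E b a" "E a s"
    and n: "\<not> E u v" "\<not> E u s" "\<not> E v s" "\<not> E u a" "\<not> E v a" "\<not> E b s"
  shows "has_induced V E 5 chair_edge"
proof -
  have sym: "\<And>x y. E x y \<Longrightarrow> E y x" and irr: "\<And>x. \<not> E x x" using sg unfolding simple_graph_def by blast+
  have d: "u \<noteq> b" "v \<noteq> b" "b \<noteq> a" "a \<noteq> s" "u \<noteq> s" "u \<noteq> a" "v \<noteq> a" "v \<noteq> s" "b \<noteq> s"
    using e n irr sym by metis+
  let ?f = "\<lambda>n. [u,b,a,s,v] ! n"
  have "inj_on ?f {0..<5}"
    unfolding inj_on_def using d uv by (auto simp: all5 less_Suc_eq eval_nat_numeral)
  moreover have "?f ` {0..<5} \<subseteq> V" using inV by (auto simp: less_Suc_eq eval_nat_numeral)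
  moreover have "\<forall>i<5. \<forall>j<5. i \<noteq> j \<longrightarrow> (E (?f i) (?f j) \<longleftrightarrow> chair_edge i j)"
    unfolding all5 chair_edge_def using e n sym by (auto simp: doubleton_eq_iff)
  ultimately show ?thesis unfolding has_induced_def by blast
qed

lemma cv_adj:
  assumes "induced_C5 V E C"
  shows "E (cv C a) (cv C b) \<longleftrightarrow> (b - a) mod 5 \<in> {1,4}"
proof -
  have h: "\<forall>x<5. \<forall>y<5. E (C x) (C y) \<longleftrightarrow> (int y - int x) mod 5 \<in> {1, 4}"
    using assms unfolding induced_C5_def by blast
  have "nat (a mod 5) < 5" "nat (b mod 5) < 5" by auto
  from h[rule_format, OF this] have "E (cv C a) (cv C b) \<longleftrightarrow> (b mod 5 - a mod 5) mod 5 \<in> {1,4}"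
    unfolding cv_def by simp
  also have "(b mod 5 - a mod 5) mod 5 = (b - a) mod 5" by (simp add: mod_diff_eq)
  finally show ?thesis .
qed

lemma cv_eq:
  assumes "induced_C5 V E C"
  shows "cv C a = cv C b \<longleftrightarrow> a mod 5 = b mod 5"
proof -
  have inj: "inj_on C {0..<5}" using assms unfolding induced_C5_def by blast
  have "nat (a mod 5) \<in> {0..<5}" "nat (b mod 5) \<in> {0..<5}" by auto
  then have "cv C a = cv C b \<longleftrightarrow> nat (a mod 5) = nat (b mod 5)"
    unfolding cv_def using inj by (auto dest: inj_onD)
  also have "\<dots> \<longleftrightarrow> a mod 5 = b mod 5" using eq_nat_nat_iff[of "a mod 5" "b mod 5"] by simp
  finally show ?thesis .
qed

lemma cv_img: "cv C a \<in> C ` {0..<5}"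
  unfolding cv_def by (rule imageI) auto

lemma cv_V: "induced_C5 V E C \<Longrightarrow> cv C a \<in> V"
  using cv_img[of C a] unfolding induced_C5_def by blast

lemma NC_iff:
  assumes "induced_C5 V E C" "NC E C x = cv C ` P"
  shows "E x (cv C q) \<longleftrightarrow> (\<exists>p\<in>P. q mod 5 = p mod 5)"
proof -
  have "E x (cv C q) \<longleftrightarrow> cv C q \<in> NC E C x" unfolding NC_def using cv_img by blast
  also have "\<dots> \<longleftrightarrow> (\<exists>p\<in>P. cv C q = cv C p)" using assms(2) by auto
  finally show ?thesis using cv_eq[OF assms(1)] by simp
qed

lemma NC_all:
  assumes "NC E C x = C ` {0..<5}"
  shows "E x (cv C q)"
proof -
  have "cv C q \<in> NC E C x" using assms cv_img[of C q] by simp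
  then show ?thesis unfolding NC_def by simp
qed

lemma s_facts:
  assumes C5: "induced_C5 V E C" and "s \<in> R V E C i"
  shows "E s (cv C i) \<and> (E s (cv C (i+1)) \<longrightarrow> E s (cv C (i+2)))"
  proof -
    have "s \<in> S13 V E C (i+1) \<or> s \<in> S13 V E C (i-1) \<or> s \<in> S23 V E C i \<or>
      s \<in> S4 V E C (i+1) \<or> s \<in> S4 V E C (i-1) \<or> s \<in> S5 V E C"
      using assms(2) unfolding R_def by blast
    then show ?thesis
    proof (elim disjE)
      assume "s \<in> S13 V E C (i+1)"
      then have "NC E C s = cv C ` {i+1-1, i+1, i+1+1}" unfolding S13_def by auto
      from NC_iff[OF C5 this] show ?thesis by (simp add: mod_eq_dvd_iff)
    next
      assume "s \<in> S13 V E C (i-1)"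
      then have "NC E C s = cv C ` {i-1-1, i-1, i-1+1}" unfolding S13_def by auto
      from NC_iff[OF C5 this] show ?thesis by (simp add: mod_eq_dvd_iff)
    next
      assume "s \<in> S23 V E C i"
      then have "NC E C s = cv C ` {i-2, i, i+2}" unfolding S23_def by auto
      from NC_iff[OF C5 this] show ?thesis by (simp add: mod_eq_dvd_iff)
    next
      assume "s \<in> S4 V E C (i+1)"
      then have "NC E C s = cv C ` {i+1-2, i+1-1, i+1+1, i+1+2}" unfolding S4_def by auto
      from NC_iff[OF C5 this] show ?thesis by (simp add: mod_eq_dvd_iff)
    next
      assume "s \<in> S4 V E C (i-1)"
      then have "NC E C s = cv C ` {i-1-2, i-1-1, i-1+1, i-1+2}" unfolding S4_def by auto
      from NC_iff[OF C5 this] show ?thesis by (simp add: mod_eq_dvd_iff)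
    next
      assume "s \<in> S5 V E C"
      then have "NC E C s = C ` {0..<5}" unfolding S5_def by auto
      from NC_all[OF this] show ?thesis by simp
    qed
  qed

lemma u_facts:
  assumes C5: "induced_C5 V E C" and "u \<in> S4 V E C i"
  shows "u \<in> V \<and> E u (cv C (i+1)) \<and> E u (cv C (i+2)) \<and> \<not> E u (cv C i)"
proof -
  have setu: "NC E C u = cv C ` {i-2, i-1, i+1, i+2}" and uV: "u \<in> V"
    using assms(2) unfolding S4_def outside_def by auto
  show ?thesis using uV NC_iff[OF C5 setu] by (simp add: mod_eq_dvd_iff)
qed

lemma combine:
  assumes sg: "simple_graph V E" and nc: "\<not> has_induced V E 5 chair_edge"
    and inV: "u \<in> V" "v \<in> V" "s \<in> V" "w0 \<in> V" "w1 \<in> V" "w2 \<in> V"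
    and uv: "u \<noteq> v" "\<not> E u v"
    and cyc: "E w1 w0" "\<not> E w2 w0"
    and uvf: "E u w1" "E v w1" "E u w2" "E v w2" "\<not> E u w0" "\<not> E v w0"
    and sf: "E s w0" "E s w1 \<Longrightarrow> E s w2"
    and nus: "\<not> E u s" "\<not> E v s"
  shows False
proof -
  have sym: "\<And>x y. E x y \<Longrightarrow> E y x" using sg unfolding simple_graph_def by blast
  show False
  proof (cases "E s w2")
    case True
    have "has_induced V E 5 chair_edge"
      by (rule chair_found[OF sg inV(1,2,4,3,6) uv(1) uvf(3,4) sym[OF True] sf(1) uv(2) uvf(5,6) nus cyc(2)])
    with nc show False by (rule notE)
  next
    case False
    have n1: "\<not> E w1 s" using False sf sym by blast
    have "has_induced V E 5 chair_edge"
      by (rule chair_found[OF sg inV(1,2,3,4,5) uv(1) uvf(1,2) cyc(1) sym[OF sf(1)] uv(2) nus uvf(5,6) n1])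
    with nc show False by (rule notE)
  qed
qed

theorem mainTheorem11:
  fixes V :: "'a set" and E :: "'a \<Rightarrow> 'a \<Rightarrow> bool" and C :: "nat \<Rightarrow> 'a"
    and i :: int and u v s :: 'a
  assumes "simple_graph V E"
    and "P5_chair_free V E"
    and "induced_C5 V E C"
    and "1 \<le> i" and "i \<le> 5"
    and "u \<in> S4 V E C i" and "v \<in> S4 V E C i" and "u \<noteq> v" and "\<not> E u v"
    and "s \<in> R V E C i"
  shows "E s u \<or> E s v"
proof (rule ccontr)
  assume nn: "\<not> (E s u \<or> E s v)"
  note C5 = assms(3)
  have sym: "\<And>x y. E x y \<Longrightarrow> E y x" using assms(1) unfolding simple_graph_def by blast
  have nc: "\<not> has_induced V E 5 chair_edge" using assms(2) unfolding P5_chair_free_def by blast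
  have cyc: "E (cv C (i+1)) (cv C i)" "\<not> E (cv C (i+2)) (cv C i)"
    using cv_adj[OF C5] by simp_all
  have sV: "s \<in> V" using assms(10) unfolding R_def S13_def S23_def S4_def S5_def outside_def by auto
  note uf = u_facts[OF C5 assms(6)] and vf = u_facts[OF C5 assms(7)] and sf = s_facts[OF C5 assms(10)]
  have nus: "\<not> E u s" "\<not> E v s" using nn sym by blast+
  show False
    by (rule combine[OF assms(1) nc conjunct1[OF uf] conjunct1[OF vf] sV cv_V[OF C5] cv_V[OF C5] cv_V[OF C5]
      assms(8,9) cyc]) (use uf vf sf nus in simp_all)
qed

end
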